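(* Let $p\geq 2$ be an integer. Then $\mathcal{M}_3^p=\mathcal{M}_2^p\times_{\gamma_2}\mathcal{M}_2^p$; that is, $c=c_1+c_2\mathbf{i_3}\in\mathbb{M}(3)$ (with $c_1,c_2\in\mathbb{M}(2)$) lies in $\mathcal{M}_3^p$ if and only if both $c_1-c_2\mathbf{i_2}\in\mathcal{M}_2^p$ and $c_1+c_2\mathbf{i_2}\in\mathcal{M}_2^p$.
   Context: The tricomplex numbers $\mathbb{M}(3)$ form the commutative real algebra generated by commuting units $\mathbf{i_1},\mathbf{i_2},\mathbf{i_3}$ with $\mathbf{i_k}^2=-1$; set $\mathbf{j_1}=\mathbf{i_1}\mathbf{i_2}$, $\mathbf{j_2}=\mathbf{i_1}\mathbf{i_3}$, $\mathbf{j_3}=\mathbf{i_2}\mathbf{i_3}$, $\mathbf{i_4}=\mathbf{i_1}\mathbf{i_2}\mathbf{i_3}$. It has real basis $1,\mathbf{i_1},\mathbf{i_2},\mathbf{i_3},\mathbf{i_4},\mathbf{j_1},\mathbf{j_2},\mathbf{j_3}$ and norm $\|\cdot\|_3$ equal to the Euclidean norm of the 8 real coordinates. The bicomplex numbers $\mathbb{M}(2)$ are the subalgebra spanned by $1,\mathbf{i_1},\mathbf{i_2},\mathbf{j_1}$, with norm $\|\cdot\|_2$ the Euclidean norm of its 4 coordinates; every $\eta\in\mathbb{M}(3)$ is uniquely $\zeta_1+\zeta_2\mathbf{i_3}$ with $\zeta_1,\zeta_2\in\mathbb{M}(2)$. With $\gamma_2=\frac{1+\mathbf{j_3}}{2}$,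 $\overline{\gamma}_2=\frac{1-\mathbf{j_3}}{2}$, one has $\eta=(\zeta_1-\zeta_2\mathbf{i_2})\gamma_2+(\zeta_1+\zeta_2\mathbf{i_2})\overline{\gamma}_2$. For $X_1,X_2\subseteq\mathbb{M}(2)$, $X_1\times_{\gamma_2}X_2=\{u_1\gamma_2+u_2\overline{\gamma}_2 : u_1\in X_1,u_2\in X_2\}$. For $n\in\{2,3\}$ and $c\in\mathbb{M}(n)$, $Q_{p,c}(\eta)=\eta^p+c$, $Q_{p,c}^m$ its $m$-fold iterate, and $\mathcal{M}_n^p=\{c\in\mathbb{M}(n) : (Q_{p,c}^m(0))_{m\geq1}\text{ is bounded in }\|\cdot\|_n\}$. *)

theory Defs
  imports Complex_Main
begin

text \<open>A bicomplex number z1 + z2 i2 with z1, z2 complex numbers in the variable i1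
  (the complex unit of type complex plays the role of i1). Real coordinates:
  1 = Re z1, i1 = Im z1, i2 = Re z2, j1 = i1 i2 = Im z2.\<close>

datatype bicomplex = BC (bc1: complex) (bc2: complex)

instantiation bicomplex :: comm_ring_1
begin
definition "0 = BC 0 0"
definition "1 = BC 1 0"
definition "x + y = BC (bc1 x + bc1 y) (bc2 x + bc2 y)"
definition "x - y = BC (bc1 x - bc1 y) (bc2 x - bc2 y)"
definition "- x = BC (- bc1 x) (- bc2 x)"
definition "x * y = BC (bc1 x * bc1 y - bc2 x * bc2 y) (bc1 x * bc2 y + bc2 x * bc1 y)"
instance
  by standard (auto simp: zero_bicomplex_def one_bicomplex_def plus_bicomplex_def
      minus_bicomplex_def uminus_bicomplex_def times_bicomplex_def algebra_simps
      intro!: bicomplex.expand)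
end

definition bc_i2 :: bicomplex where "bc_i2 = BC 0 1"

definition bc_norm :: "bicomplex \<Rightarrow> real" where
  "bc_norm z = sqrt ((Re (bc1 z))\<^sup>2 + (Im (bc1 z))\<^sup>2 + (Re (bc2 z))\<^sup>2 + (Im (bc2 z))\<^sup>2)"

text \<open>A tricomplex number zeta1 + zeta2 i3 with zeta1, zeta2 bicomplex.\<close>

datatype tricomplex = TC (tc1: bicomplex) (tc2: bicomplex)

instantiation tricomplex :: comm_ring_1
begin
definition "0 = TC 0 0"
definition "1 = TC 1 0"
definition "x + y = TC (tc1 x + tc1 y) (tc2 x + tc2 y)"
definition "x - y = TC (tc1 x - tc1 y) (tc2 x - tc2 y)"
definition "- x = TC (- tc1 x) (- tc2 x)"
definition "x * y = TC (tc1 x * tc1 y - tc2 x * tc2 y) (tc1 x * tc2 y + tc2 x * tc1 y)"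
instance
  by standard (auto simp: zero_tricomplex_def one_tricomplex_def plus_tricomplex_def
      minus_tricomplex_def uminus_tricomplex_def times_tricomplex_def algebra_simps
      intro!: tricomplex.expand)
end

definition tc_of_bc :: "bicomplex \<Rightarrow> tricomplex" where "tc_of_bc z = TC z 0"

definition tc_i2 :: tricomplex where "tc_i2 = tc_of_bc bc_i2"
definition tc_i3 :: tricomplex where "tc_i3 = TC 0 1"
definition tc_j3 :: tricomplex where "tc_j3 = tc_i2 * tc_i3"

definition tc_half :: tricomplex where "tc_half = tc_of_bc (BC (1/2) 0)"
definition gamma2 :: tricomplex where "gamma2 = tc_half * (1 + tc_j3)"
definition gamma2_bar :: tricomplex where "gamma2_bar = tc_half * (1 - tc_j3)"

text \<open>Euclidean norm of the 8 real coordinates: the coordinates of zeta1 (on 1,i1,i2,j1)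
  together with those of zeta2 (on i3, j2, j3, i4).\<close>
definition tc_norm :: "tricomplex \<Rightarrow> real" where
  "tc_norm x = sqrt ((bc_norm (tc1 x))\<^sup>2 + (bc_norm (tc2 x))\<^sup>2)"

definition times_gamma2 :: "bicomplex set \<Rightarrow> bicomplex set \<Rightarrow> tricomplex set" where
  "times_gamma2 X1 X2 =
     {tc_of_bc u1 * gamma2 + tc_of_bc u2 * gamma2_bar | u1 u2. u1 \<in> X1 \<and> u2 \<in> X2}"

definition Q :: "nat \<Rightarrow> 'a::comm_ring_1 \<Rightarrow> 'a \<Rightarrow> 'a" where
  "Q p c \<eta> = \<eta> ^ p + c"

definition multibrot2 :: "nat \<Rightarrow> bicomplex set" where
  "multibrot2 p = {c. \<exists>B. \<forall>m\<ge>1. bc_norm ((Q p c ^^ m) 0) \<le> B}"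

definition multibrot3 :: "nat \<Rightarrow> tricomplex set" where
  "multibrot3 p = {c. \<exists>B. \<forall>m\<ge>1. tc_norm ((Q p c ^^ m) 0) \<le> B}"

end

theory Submission
  imports Defs
begin

definition ph1 :: "tricomplex \<Rightarrow> bicomplex" where "ph1 x = tc1 x - tc2 x * bc_i2"
definition ph2 :: "tricomplex \<Rightarrow> bicomplex" where "ph2 x = tc1 x + tc2 x * bc_i2"

lemma i2sq: "bc_i2 * bc_i2 = -1"
  by (simp add: bc_i2_def times_bicomplex_def one_bicomplex_def uminus_bicomplex_def)

lemma tc_mult: "x * y = TC (tc1 x * tc1 y - tc2 x * tc2 y) (tc1 x * tc2 y + tc2 x * tc1 y)"
  by (simp add: times_tricomplex_def)

lemma ph1_mult: "ph1 (x*y) = ph1 x * ph1 y"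
proof -
  have "ph1 x * ph1 y = tc1 x * tc1 y - tc2 x * tc2 y * (bc_i2*(-bc_i2)) - (tc1 x * tc2 y + tc2 x * tc1 y)*bc_i2"
    by (simp add: ph1_def algebra_simps)
  then show ?thesis using i2sq by (simp add: ph1_def tc_mult)
qed

lemma ph2_mult: "ph2 (x*y) = ph2 x * ph2 y"
proof -
  have "ph2 x * ph2 y = tc1 x * tc1 y + tc2 x * tc2 y * (bc_i2*bc_i2) + (tc1 x * tc2 y + tc2 x * tc1 y)*bc_i2"
    by (simp add: ph2_def algebra_simps)
  then show ?thesis using i2sq by (simp add: ph2_def tc_mult)
qed

lemma ph1_add: "ph1 (x+y) = ph1 x + ph1 y"
  by (simp add: ph1_def plus_tricomplex_def algebra_simps)
lemma ph2_add: "ph2 (x+y) = ph2 x + ph2 y"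
  by (simp add: ph2_def plus_tricomplex_def algebra_simps)
lemma ph1_0: "ph1 0 = 0" by (simp add: ph1_def zero_tricomplex_def)
lemma ph2_0: "ph2 0 = 0" by (simp add: ph2_def zero_tricomplex_def)
lemma ph1_1: "ph1 1 = 1" by (simp add: ph1_def one_tricomplex_def)
lemma ph2_1: "ph2 1 = 1" by (simp add: ph2_def one_tricomplex_def)

lemma ph1_pow: "ph1 (x^n) = ph1 x ^ n"
  by (induction n) (simp_all add: ph1_1 ph1_mult)
lemma ph2_pow: "ph2 (x^n) = ph2 x ^ n"
  by (induction n) (simp_all add: ph2_1 ph2_mult)

lemma ph1_iter: "ph1 ((Q p c ^^ m) 0) = (Q p (ph1 c) ^^ m) 0"
  by (induction m) (simp_all add: ph1_0 Q_def ph1_add ph1_pow)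
lemma ph2_iter: "ph2 ((Q p c ^^ m) 0) = (Q p (ph2 c) ^^ m) 0"
  by (induction m) (simp_all add: ph2_0 Q_def ph2_add ph2_pow)

lemma bcn_sq: "(bc_norm z)^2 = (Re (bc1 z))\<^sup>2 + (Im (bc1 z))\<^sup>2 + (Re (bc2 z))\<^sup>2 + (Im (bc2 z))\<^sup>2"
  unfolding bc_norm_def by simp

lemma bcn_nonneg: "bc_norm z \<ge> 0" unfolding bc_norm_def by simp
lemma tcn_nonneg: "tc_norm z \<ge> 0" unfolding tc_norm_def by simp

lemma tcn_sq: "(tc_norm x)^2 = (bc_norm (tc1 x))^2 + (bc_norm (tc2 x))^2"
  unfolding tc_norm_def by simp

lemma w_i2: "w * bc_i2 = BC (- bc2 w) (bc1 w)"
  by (simp add: bc_i2_def times_bicomplex_def)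
lemma pm: "(a+b)^2 + (a-b)^2 = 2*a^2 + 2*(b::real)^2"
  by (simp add: power2_sum power2_diff)
lemma ph1_c: "ph1 x = BC (bc1 (tc1 x) + bc2 (tc2 x)) (bc2 (tc1 x) - bc1 (tc2 x))"
  by (simp add: ph1_def w_i2 minus_bicomplex_def)
lemma ph2_c: "ph2 x = BC (bc1 (tc1 x) - bc2 (tc2 x)) (bc2 (tc1 x) + bc1 (tc2 x))"
  by (simp add: ph2_def w_i2 plus_bicomplex_def)
lemma norm_id: "2 * (tc_norm x)^2 = (bc_norm (ph1 x))^2 + (bc_norm (ph2 x))^2"
proof -
  define a1 where "a1 = Re (bc1 (tc1 x))"
  define a2 where "a2 = Im (bc1 (tc1 x))"
  define a3 where "a3 = Re (bc2 (tc1 x))"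
  define a4 where "a4 = Im (bc2 (tc1 x))"
  define b1 where "b1 = Re (bc1 (tc2 x))"
  define b2 where "b2 = Im (bc1 (tc2 x))"
  define b3 where "b3 = Re (bc2 (tc2 x))"
  define b4 where "b4 = Im (bc2 (tc2 x))"
  have L: "(bc_norm (ph1 x))^2 = (a1+b3)^2 + (a2+b4)^2 + (a3-b1)^2 + (a4-b2)^2"
    unfolding bcn_sq ph1_c a1_def a2_def a3_def a4_def b1_def b2_def b3_def b4_def by simp
  have R: "(bc_norm (ph2 x))^2 = (a1-b3)^2 + (a2-b4)^2 + (a3+b1)^2 + (a4+b2)^2"
    unfolding bcn_sq ph2_c a1_def a2_def a3_def a4_def b1_def b2_def b3_def b4_def by simp
  have T: "(tc_norm x)^2 = a1^2+a2^2+a3^2+a4^2+b1^2+b2^2+b3^2+b4^2"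
    unfolding tcn_sq bcn_sq a1_def a2_def a3_def a4_def b1_def b2_def b3_def b4_def by simp
  have "(a1+b3)^2 + (a1-b3)^2 = 2*a1^2 + 2*b3^2" "(a2+b4)^2 + (a2-b4)^2 = 2*a2^2 + 2*b4^2"
       "(a3+b1)^2 + (a3-b1)^2 = 2*a3^2 + 2*b1^2" "(a4+b2)^2 + (a4-b2)^2 = 2*a4^2 + 2*b2^2"
    by (rule pm)+
  then show ?thesis unfolding L R T by (smt (verit))
qed

lemma auxA: fixes t a b :: real assumes "2*t^2 = a^2 + b^2" "t \<ge> 0" shows "a \<le> 2*t"
proof -
  have "b^2 \<ge> 0" "t^2 \<ge> 0" by simp_all
  have "(2*t)^2 = 4*t^2" by (simp add: power_mult_distrib)
  then have "a^2 \<le> (2*t)^2" using assms(1) \<open>b^2 \<ge> 0\<close> \<open>t^2 \<ge> 0\<close> by linarith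
  then show ?thesis using assms(2) power2_le_imp_le[of a "2*t"] by simp
qed
lemma auxB: fixes t a b :: real assumes "2*t^2 = a^2 + b^2" "a \<ge> 0" "b \<ge> 0" shows "t \<le> a + b"
proof -
  have "a*b \<ge> 0" "a^2 \<ge> 0" "b^2 \<ge> 0" using assms by simp_all
  have "(a+b)^2 = a^2 + b^2 + 2*(a*b)" by (simp add: power2_sum)
  then have "t^2 \<le> (a+b)^2" using assms(1) \<open>a*b \<ge> 0\<close> \<open>a^2 \<ge> 0\<close> \<open>b^2 \<ge> 0\<close> by linarith
  then show ?thesis using assms power2_le_imp_le[of t "a+b"] by simp
qed

lemma b1: "bc_norm (ph1 x) \<le> 2 * tc_norm x"
  using auxA[OF norm_id tcn_nonneg] .
lemma b2: "bc_norm (ph2 x) \<le> 2 * tc_norm x"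
proof -
  have "2 * (tc_norm x)^2 = (bc_norm (ph2 x))^2 + (bc_norm (ph1 x))^2" by (subst add.commute) (rule norm_id)
  then show ?thesis by (rule auxA[OF _ tcn_nonneg])
qed
lemma b3: "tc_norm x \<le> bc_norm (ph1 x) + bc_norm (ph2 x)"
  using auxB[OF norm_id bcn_nonneg bcn_nonneg] .

lemma memb: "c \<in> multibrot3 p \<longleftrightarrow> ph1 c \<in> multibrot2 p \<and> ph2 c \<in> multibrot2 p"
proof
  assume "c \<in> multibrot3 p"
  then obtain B where B: "\<forall>m\<ge>1. tc_norm ((Q p c ^^ m) 0) \<le> B" unfolding multibrot3_def by auto
  have "\<forall>m\<ge>1. bc_norm ((Q p (ph1 c) ^^ m) 0) \<le> 2*B"
  proof (intro allI impI)
    fix m :: nat assume "m \<ge> 1"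
    then have "tc_norm ((Q p c ^^ m) 0) \<le> B" using B by blast
    moreover have "bc_norm ((Q p (ph1 c) ^^ m) 0) \<le> 2 * tc_norm ((Q p c ^^ m) 0)"
      using b1[where x="(Q p c ^^ m) 0"] unfolding ph1_iter .
    ultimately show "bc_norm ((Q p (ph1 c) ^^ m) 0) \<le> 2*B" by linarith
  qed
  moreover have "\<forall>m\<ge>1. bc_norm ((Q p (ph2 c) ^^ m) 0) \<le> 2*B"
  proof (intro allI impI)
    fix m :: nat assume "m \<ge> 1"
    then have "tc_norm ((Q p c ^^ m) 0) \<le> B" using B by blast
    moreover have "bc_norm ((Q p (ph2 c) ^^ m) 0) \<le> 2 * tc_norm ((Q p c ^^ m) 0)"
      using b2[where x="(Q p c ^^ m) 0"] unfolding ph2_iter .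
    ultimately show "bc_norm ((Q p (ph2 c) ^^ m) 0) \<le> 2*B" by linarith
  qed
  ultimately show "ph1 c \<in> multibrot2 p \<and> ph2 c \<in> multibrot2 p"
    unfolding multibrot2_def by blast
next
  assume "ph1 c \<in> multibrot2 p \<and> ph2 c \<in> multibrot2 p"
  then obtain B1 B2 where B1: "\<forall>m\<ge>1. bc_norm ((Q p (ph1 c) ^^ m) 0) \<le> B1"
    and B2: "\<forall>m\<ge>1. bc_norm ((Q p (ph2 c) ^^ m) 0) \<le> B2"
    unfolding multibrot2_def by auto
  have "\<forall>m\<ge>1. tc_norm ((Q p c ^^ m) 0) \<le> B1 + B2"
  proof (intro allI impI)
    fix m :: nat assume "m \<ge> 1"
    then have "bc_norm ((Q p (ph1 c) ^^ m) 0) \<le> B1" "bc_norm ((Q p (ph2 c) ^^ m) 0) \<le> B2"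
      using B1 B2 by blast+
    moreover have "tc_norm ((Q p c ^^ m) 0) \<le> bc_norm ((Q p (ph1 c) ^^ m) 0) + bc_norm ((Q p (ph2 c) ^^ m) 0)"
      using b3[where x="(Q p c ^^ m) 0"] unfolding ph1_iter ph2_iter .
    ultimately show "tc_norm ((Q p c ^^ m) 0) \<le> B1 + B2" by linarith
  qed
  then show "c \<in> multibrot3 p" unfolding multibrot3_def by blast
qed

definition hh :: bicomplex where "hh = BC (1/2) 0"
lemma hh2: "hh + hh = 1" by (simp add: hh_def plus_bicomplex_def one_bicomplex_def)
lemma g1: "gamma2 = TC hh (hh * bc_i2)"
  by (simp add: gamma2_def tc_half_def hh_def tc_j3_def tc_i2_def tc_i3_def tc_of_bc_def tc_mult
        plus_tricomplex_def one_tricomplex_def)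
lemma g2: "gamma2_bar = TC hh (- (hh * bc_i2))"
  by (simp add: gamma2_bar_def tc_half_def hh_def tc_j3_def tc_i2_def tc_i3_def tc_of_bc_def tc_mult
        minus_tricomplex_def one_tricomplex_def)
lemma lhs: "tc_of_bc u1 * gamma2 + tc_of_bc u2 * gamma2_bar = TC ((u1+u2)*hh) ((u1-u2)*hh*bc_i2)"
  by (simp add: g1 g2 tc_of_bc_def tc_mult plus_tricomplex_def algebra_simps)
lemma decomp: "tc_of_bc u1 * gamma2 + tc_of_bc u2 * gamma2_bar = TC a b \<longleftrightarrow>
   (u1 = a - b * bc_i2 \<and> u2 = a + b * bc_i2)"
proof -
  have key: "(u1+u2)*hh = a \<and> (u1-u2)*hh*bc_i2 = b \<longleftrightarrow> (u1 = a - b * bc_i2 \<and> u2 = a + b * bc_i2)"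
  proof
    assume A: "(u1+u2)*hh = a \<and> (u1-u2)*hh*bc_i2 = b"
    then have "b * bc_i2 = (u1-u2)*hh*(bc_i2*bc_i2)" by (simp add: algebra_simps)
    then have B: "b * bc_i2 = -((u1-u2)*hh)" by (simp add: i2sq)
    have "a - b*bc_i2 = (u1+u2)*hh + (u1-u2)*hh" using A B by simp
    also have "\<dots> = u1 * (hh+hh)" by (simp add: algebra_simps)
    finally have "a - b*bc_i2 = u1 * (hh+hh)" .
    moreover have "a + b*bc_i2 = (u1+u2)*hh - (u1-u2)*hh" using A B by simp
    moreover have "(u1+u2)*hh - (u1-u2)*hh = u2 * (hh+hh)" by (simp add: algebra_simps)
    ultimately show "u1 = a - b * bc_i2 \<and> u2 = a + b * bc_i2" by (simp add: hh2)
  next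
    assume A: "u1 = a - b * bc_i2 \<and> u2 = a + b * bc_i2"
    have C1: "(u1+u2)*hh = a*(hh+hh)" using A by (simp add: algebra_simps)
    have D: "u1 - u2 = -(b*bc_i2 + b*bc_i2)" using A by simp
    have E: "-(b*bc_i2 + b*bc_i2)*hh*bc_i2 = -(b*(hh+hh))*(bc_i2*bc_i2)" by (simp add: algebra_simps)
    have C2: "(u1-u2)*hh*bc_i2 = -(b*(hh+hh))*(bc_i2*bc_i2)" unfolding D E ..
    show "(u1+u2)*hh = a \<and> (u1-u2)*hh*bc_i2 = b" using C1 C2 by (simp add: hh2 i2sq)
  qed
  show ?thesis unfolding lhs tricomplex.inject using key .
qed

theorem mainTheorem12:
  fixes p :: nat
  assumes "p \<ge> 2"
  shows "multibrot3 p = times_gamma2 (multibrot2 p) (multibrot2 p)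
     \<and> (\<forall>c1 c2. TC c1 c2 \<in> multibrot3 p \<longleftrightarrow>
           (c1 - c2 * bc_i2 \<in> multibrot2 p \<and> c1 + c2 * bc_i2 \<in> multibrot2 p))"
proof
  show 2: "\<forall>c1 c2. TC c1 c2 \<in> multibrot3 p \<longleftrightarrow>
           (c1 - c2 * bc_i2 \<in> multibrot2 p \<and> c1 + c2 * bc_i2 \<in> multibrot2 p)"
  proof (intro allI)
    fix c1 c2
    show "TC c1 c2 \<in> multibrot3 p \<longleftrightarrow>
           (c1 - c2 * bc_i2 \<in> multibrot2 p \<and> c1 + c2 * bc_i2 \<in> multibrot2 p)"
      using memb[of "TC c1 c2" p] unfolding ph1_def ph2_def tricomplex.sel .
  qed
  show "multibrot3 p = times_gamma2 (multibrot2 p) (multibrot2 p)"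
  proof (rule set_eqI)
    fix c :: tricomplex
    obtain a b where c: "c = TC a b" by (cases c)
    show "c \<in> multibrot3 p \<longleftrightarrow> c \<in> times_gamma2 (multibrot2 p) (multibrot2 p)"
    proof -
      have "c \<in> times_gamma2 (multibrot2 p) (multibrot2 p) \<longleftrightarrow>
         (\<exists>u1 u2. (u1 = a - b * bc_i2 \<and> u2 = a + b * bc_i2) \<and> u1 \<in> multibrot2 p \<and> u2 \<in> multibrot2 p)"
        unfolding times_gamma2_def c mem_Collect_eq eq_commute[of "TC a b"] decomp by (rule refl)
      also have "\<dots> \<longleftrightarrow> (a - b * bc_i2 \<in> multibrot2 p \<and> a + b * bc_i2 \<in> multibrot2 p)" by simp
      also have "\<dots> \<longleftrightarrow> c \<in> multibrot3 p" unfolding c using 2 by simp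
      finally show ?thesis by (rule sym)
    qed
  qed
qed

end
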